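(* Let $i,j\in\mathbb{Z}^2$ be distinct and let $H$ be a finite DAG (finitely many nodes) containing $i$ and $j$ with $\mathrm{An}_H(i)\cap\mathrm{An}_H(j)=\emptyset$. Then $p_{c,2,\mathcal{P},H}=1$.
   Context: Oriented square lattice: node set $\mathbb{Z}^2$, with a directed edge $u\to v$ if and only if $v-u\in\{(1,0),(0,1)\}$; $E(\mathbb{Z}^2)$ denotes this edge set. A DAG $H$ here has $V(H)\subset\mathbb{Z}^2$ and $E(H)\subset E(\mathbb{Z}^2)$; $\mathrm{An}_H(u)$ is $u$ together with all nodes having a directed path to $u$ in $H$. Bernoulli bond percolation with parameter $p$: each edge of $E(\mathbb{Z}^2)$ is independently open with probability $p$; $P_p$ is the product measure. $C(k)$ is the set of nodes joined to $k$ by a path of open edges (orientation ignored), with those open edges. Enlargement $U(H)$: the random DAG with node set $\bigcup_{k\in V(H)}V(C(k))$ and edge set $E(H)\cup\bigcup_{k\in V(H)}E(C(k))$; equivalently, percolation under the measure $P_p^H$ on $\{0,1\}^{E(\mathbb{Z}^2)}$ in which edges of $E(H)$ are open with probability $1$ and all other edges independently open with probability $p$. $U(H)\in\mathcal{P}$ means $\mathrm{An}(i)\cap\mathrm{An}(j)\neq\emptyset$ in $U(H)$ (ancestors via directed open paths). Critical probability: $p_{c,2,\mathcal{P},H}=\inf\{p\in[0,1]: P_p(U(H)\in\mathcal{P})=1\}$. *)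

theory Defs
  imports "HOL-Probability.Probability"
begin

type_synonym node = "int \<times> int"
type_synonym edge = "node \<times> node"

definition lattice_edges :: "edge set" where
  "lattice_edges = {(u, v). v = (fst u + 1, snd u) \<or> v = (fst u, snd u + 1)}"

definition perc_measure :: "real \<Rightarrow> (edge \<Rightarrow> bool) measure" where
  "perc_measure p = PiM lattice_edges (\<lambda>_. measure_pmf (bernoulli_pmf p))"

definition open_edges :: "(edge \<Rightarrow> bool) \<Rightarrow> edge set" where
  "open_edges \<omega> = {e \<in> lattice_edges. \<omega> e}"

definition cluster_nodes :: "(edge \<Rightarrow> bool) \<Rightarrow> node \<Rightarrow> node set" where
  "cluster_nodes \<omega> k = {v. (k, v) \<in> (open_edges \<omega> \<union> (open_edges \<omega>)\<inverse>)\<^sup>*}"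

definition cluster_edges :: "(edge \<Rightarrow> bool) \<Rightarrow> node \<Rightarrow> edge set" where
  "cluster_edges \<omega> k = {e \<in> open_edges \<omega>. fst e \<in> cluster_nodes \<omega> k \<and> snd e \<in> cluster_nodes \<omega> k}"

definition enl_nodes :: "node set \<Rightarrow> (edge \<Rightarrow> bool) \<Rightarrow> node set" where
  "enl_nodes VH \<omega> = (\<Union>k\<in>VH. cluster_nodes \<omega> k)"

definition enl_edges :: "node set \<Rightarrow> edge set \<Rightarrow> (edge \<Rightarrow> bool) \<Rightarrow> edge set" where
  "enl_edges VH EH \<omega> = EH \<union> (\<Union>k\<in>VH. cluster_edges \<omega> k)"

definition ancestors :: "edge set \<Rightarrow> node \<Rightarrow> node set" where
  "ancestors E u = {w. (w, u) \<in> E\<^sup>*}"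

text \<open>The event U(H) \<in> P: An(i) \<inter> An(j) \<noteq> {} in U(H).\<close>
definition enl_in_P :: "node \<Rightarrow> node \<Rightarrow> node set \<Rightarrow> edge set \<Rightarrow> (edge \<Rightarrow> bool) \<Rightarrow> bool" where
  "enl_in_P i j VH EH \<omega> \<longleftrightarrow>
     ancestors (enl_edges VH EH \<omega>) i \<inter> ancestors (enl_edges VH EH \<omega>) j \<noteq> {}"

definition crit_prob :: "node \<Rightarrow> node \<Rightarrow> node set \<Rightarrow> edge set \<Rightarrow> real" where
  "crit_prob i j VH EH =
     Inf {p \<in> {0..1}. measure (perc_measure p)
            {\<omega> \<in> space (perc_measure p). enl_in_P i j VH EH \<omega>} = 1}"

end

theory Submission imports Defs begin

lemma rtrancl_finite_witness:
  assumes "(a,b) \<in> R\<^sup>*"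
  shows "\<exists>R'. finite R' \<and> R' \<subseteq> R \<and> (a,b) \<in> R'\<^sup>*"
  using assms
proof (induction rule: rtrancl_induct)
  case base then show ?case by (intro exI[of _ "{}"]) auto
next
  case (step y z)
  then obtain R' where "finite R'" "R' \<subseteq> R" "(a,y) \<in> R'\<^sup>*" by blast
  then show ?case using step
    by (intro exI[of _ "insert (y,z) R'"]) (auto intro: rtrancl_into_rtrancl rtrancl_mono[THEN subsetD, rotated])
qed

definition le_cfg :: "(edge \<Rightarrow> bool) \<Rightarrow> (edge \<Rightarrow> bool) \<Rightarrow> bool" where
  "le_cfg \<omega> \<omega>' \<longleftrightarrow> (\<forall>e\<in>lattice_edges. \<omega> e \<longrightarrow> \<omega>' e)"

lemma open_mono: "le_cfg \<omega> \<omega>' \<Longrightarrow> open_edges \<omega> \<subseteq> open_edges \<omega>'"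
  by (auto simp: le_cfg_def open_edges_def)

lemma cluster_nodes_mono: "le_cfg \<omega> \<omega>' \<Longrightarrow> cluster_nodes \<omega> k \<subseteq> cluster_nodes \<omega>' k"
  unfolding cluster_nodes_def
  using rtrancl_mono[of "open_edges \<omega> \<union> (open_edges \<omega>)\<inverse>" "open_edges \<omega>' \<union> (open_edges \<omega>')\<inverse>"]
    open_mono[of \<omega> \<omega>'] by blast

lemma cluster_edges_mono: "le_cfg \<omega> \<omega>' \<Longrightarrow> cluster_edges \<omega> k \<subseteq> cluster_edges \<omega>' k"
  unfolding cluster_edges_def using open_mono cluster_nodes_mono by blast

lemma enl_edges_mono: "le_cfg \<omega> \<omega>' \<Longrightarrow> enl_edges VH EH \<omega> \<subseteq> enl_edges VH EH \<omega>'"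
  unfolding enl_edges_def using cluster_edges_mono by (meson UN_mono Un_mono order_refl)

lemma enl_in_P_mono:
  assumes "le_cfg \<omega> \<omega>'" "enl_in_P i j VH EH \<omega>" shows "enl_in_P i j VH EH \<omega>'"
proof -
  have E: "enl_edges VH EH \<omega> \<subseteq> enl_edges VH EH \<omega>'"
    unfolding enl_edges_def using cluster_edges_mono[OF assms(1)] by blast
  have "ancestors (enl_edges VH EH \<omega>) u \<subseteq> ancestors (enl_edges VH EH \<omega>') u" for u
    unfolding ancestors_def using rtrancl_mono[OF E] by blast
  then show ?thesis using assms(2) unfolding enl_in_P_def by blast
qed

lemma cluster_witness:
  assumes "v \<in> cluster_nodes \<omega> k"
  shows "\<exists>F. finite F \<and> F \<subseteq> open_edges \<omega> \<and> v \<in> cluster_nodes (\<lambda>e. e \<in> F) k"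
proof -
  let ?O = "open_edges \<omega>"
  have kv: "(k,v) \<in> (?O \<union> ?O\<inverse>)\<^sup>*" using assms unfolding cluster_nodes_def by simp
  obtain S where S: "finite S" "S \<subseteq> ?O \<union> ?O\<inverse>" "(k,v) \<in> S\<^sup>*"
    using rtrancl_finite_witness[OF kv] by blast
  define F where "F = {e \<in> ?O. e \<in> S \<or> prod.swap e \<in> S}"
  have "F \<subseteq> S \<union> prod.swap ` S"
  proof
    fix e assume "e \<in> F"
    then have "e \<in> S \<or> prod.swap e \<in> S" by (simp add: F_def)
    thus "e \<in> S \<union> prod.swap ` S" by (metis UnI1 UnI2 image_eqI swap_swap)
  qed
  hence fin: "finite F" using S(1) by (meson finite_UnI finite_imageI finite_subset)
  have FO: "F \<subseteq> ?O" unfolding F_def by auto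
  have OL: "?O \<subseteq> lattice_edges" by (auto simp: open_edges_def)
  have oF: "open_edges (\<lambda>e. e \<in> F) = F"
  proof -
    have "open_edges (\<lambda>e. e \<in> F) = {e \<in> lattice_edges. e \<in> F}" by (simp add: open_edges_def)
    thus ?thesis using FO OL by blast
  qed
  have "S \<subseteq> F \<union> F\<inverse>"
  proof
    fix x assume xS: "x \<in> S"
    obtain a b where x: "x = (a,b)" by (metis prod.exhaust)
    show "x \<in> F \<union> F\<inverse>"
    proof (cases "(a,b) \<in> ?O")
      case True then show ?thesis using xS x by (simp add: F_def)
    next
      case False
      then have "(b,a) \<in> ?O" using S(2) xS x by blast
      moreover have "prod.swap (b,a) \<in> S" using xS x by simp
      ultimately have "(b,a) \<in> F" by (simp add: F_def)
      then show ?thesis using x by simp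
    qed
  qed
  hence "(k,v) \<in> (F \<union> F\<inverse>)\<^sup>*" using rtrancl_mono[THEN subsetD] S(3) by metis
  hence "v \<in> cluster_nodes (\<lambda>e. e \<in> F) k" unfolding cluster_nodes_def oF by simp
  thus ?thesis using fin FO by blast
qed

lemma cluster_union_mono:
  assumes "F \<subseteq> G" shows "cluster_nodes (\<lambda>e. e \<in> F) k \<subseteq> cluster_nodes (\<lambda>e. e \<in> G) k"
  by (rule cluster_nodes_mono) (use assms in \<open>auto simp: le_cfg_def\<close>)

lemma edge_witness:
  assumes "e \<in> enl_edges VH EH \<omega>"
  shows "\<exists>F. finite F \<and> F \<subseteq> open_edges \<omega> \<and> e \<in> enl_edges VH EH (\<lambda>e. e \<in> F)"
proof (cases "e \<in> EH")
  case True then show ?thesis by (intro exI[of _ "{}"]) (auto simp: enl_edges_def)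
next
  case False
  then obtain k where k: "k \<in> VH" "e \<in> cluster_edges \<omega> k" using assms by (auto simp: enl_edges_def)
  then have eo: "e \<in> open_edges \<omega>" "fst e \<in> cluster_nodes \<omega> k" "snd e \<in> cluster_nodes \<omega> k"
    by (auto simp: cluster_edges_def)
  obtain F1 where F1: "finite F1" "F1 \<subseteq> open_edges \<omega>" "fst e \<in> cluster_nodes (\<lambda>e. e \<in> F1) k"
    using cluster_witness[OF eo(2)] by blast
  obtain F2 where F2: "finite F2" "F2 \<subseteq> open_edges \<omega>" "snd e \<in> cluster_nodes (\<lambda>e. e \<in> F2) k"
    using cluster_witness[OF eo(3)] by blast
  define F where "F = insert e (F1 \<union> F2)"
  have "fst e \<in> cluster_nodes (\<lambda>e. e \<in> F) k" "snd e \<in> cluster_nodes (\<lambda>e. e \<in> F) k"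
    using F1(3) F2(3) cluster_union_mono[of F1 F k] cluster_union_mono[of F2 F k] unfolding F_def by auto
  moreover have "e \<in> open_edges (\<lambda>e. e \<in> F)" using eo(1) unfolding F_def open_edges_def by auto
  ultimately have "e \<in> cluster_edges (\<lambda>e. e \<in> F) k" unfolding cluster_edges_def by auto
  then have "e \<in> enl_edges VH EH (\<lambda>e. e \<in> F)" unfolding enl_edges_def using k(1) by blast
  moreover have "finite F" "F \<subseteq> open_edges \<omega>" using F1(1,2) F2(1,2) eo(1) unfolding F_def by auto
  ultimately show ?thesis by blast
qed

lemma edges_witness:
  assumes "finite E1" "E1 \<subseteq> enl_edges VH EH \<omega>"
  shows "\<exists>F. finite F \<and> F \<subseteq> open_edges \<omega> \<and> E1 \<subseteq> enl_edges VH EH (\<lambda>e. e \<in> F)"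
  using assms
proof (induction E1 rule: finite_induct)
  case empty then show ?case by (intro exI[of _ "{}"]) auto
next
  case (insert x E1)
  then obtain F where F: "finite F" "F \<subseteq> open_edges \<omega>" "E1 \<subseteq> enl_edges VH EH (\<lambda>e. e \<in> F)" by auto
  have xe: "x \<in> enl_edges VH EH \<omega>" using insert.prems by simp
  obtain G where G: "finite G" "G \<subseteq> open_edges \<omega>" "x \<in> enl_edges VH EH (\<lambda>e. e \<in> G)"
    using edge_witness[OF xe] by blast
  have m1: "enl_edges VH EH (\<lambda>e. e \<in> F) \<subseteq> enl_edges VH EH (\<lambda>e. e \<in> F \<union> G)"
    by (rule enl_edges_mono) (simp add: le_cfg_def)
  have m2: "enl_edges VH EH (\<lambda>e. e \<in> G) \<subseteq> enl_edges VH EH (\<lambda>e. e \<in> F \<union> G)"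
    by (rule enl_edges_mono) (simp add: le_cfg_def)
  show ?case using F G m1 m2 by (intro exI[of _ "F \<union> G"]) auto
qed

lemma enl_in_P_witness:
  assumes "enl_in_P i j VH EH \<omega>"
  shows "\<exists>F. finite F \<and> F \<subseteq> open_edges \<omega> \<and> enl_in_P i j VH EH (\<lambda>e. e \<in> F)"
proof -
  let ?E = "enl_edges VH EH \<omega>"
  obtain w where w: "(w,i) \<in> ?E\<^sup>*" "(w,j) \<in> ?E\<^sup>*" using assms unfolding enl_in_P_def ancestors_def by blast
  obtain R1 where R1: "finite R1" "R1 \<subseteq> ?E" "(w,i) \<in> R1\<^sup>*" using rtrancl_finite_witness[OF w(1)] by blast
  obtain R2 where R2: "finite R2" "R2 \<subseteq> ?E" "(w,j) \<in> R2\<^sup>*" using rtrancl_finite_witness[OF w(2)] by blast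
  obtain F where F: "finite F" "F \<subseteq> open_edges \<omega>" "R1 \<union> R2 \<subseteq> enl_edges VH EH (\<lambda>e. e \<in> F)"
    using edges_witness[of "R1 \<union> R2" VH EH \<omega>] R1 R2 by blast
  have "(w,i) \<in> (enl_edges VH EH (\<lambda>e. e \<in> F))\<^sup>*" "(w,j) \<in> (enl_edges VH EH (\<lambda>e. e \<in> F))\<^sup>*"
    using R1(3) R2(3) F(3) rtrancl_mono[of R1] rtrancl_mono[of R2] by blast+
  then show ?thesis using F unfolding enl_in_P_def ancestors_def by blast
qed


definition cyl :: "real \<Rightarrow> edge set \<Rightarrow> (edge \<Rightarrow> bool) set" where
  "cyl p F = {x \<in> space (perc_measure p). \<forall>e\<in>F. x e \<in> {True}}"

lemma space_perc: "space (perc_measure p) = PiE lattice_edges (\<lambda>_. UNIV)"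
  by (simp add: perc_measure_def space_PiM)

lemma cyl_sets: "finite F \<Longrightarrow> F \<subseteq> lattice_edges \<Longrightarrow> cyl p F \<in> sets (perc_measure p)"
proof (induction F rule: finite_induct)
  case empty then show ?case by (simp add: cyl_def)
next
  case (insert a F)
  have "cyl p (insert a F) = ((\<lambda>x. x a) -` {True} \<inter> space (perc_measure p)) \<inter> cyl p F"
    by (auto simp: cyl_def)
  moreover have "(\<lambda>x. x a) -` {True} \<inter> space (perc_measure p) \<in> sets (perc_measure p)"
    unfolding perc_measure_def
    by (rule measurable_sets[OF measurable_component_singleton]) (use insert in auto)
  ultimately show ?case using insert by auto
qed

lemma emeasure_cyl:
  assumes "finite F" "F \<subseteq> lattice_edges" "0 \<le> p" "p \<le> 1"
  shows "emeasure (perc_measure p) (cyl p F) = ennreal (p ^ card F)"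
proof -
  interpret product_prob_space "\<lambda>_. measure_pmf (bernoulli_pmf p)" lattice_edges
    by unfold_locales
  have "emeasure (perc_measure p) (cyl p F) = (\<Prod>e\<in>F. emeasure (measure_pmf (bernoulli_pmf p)) {True})"
    unfolding cyl_def perc_measure_def by (rule emeasure_PiM_Collect) (use assms in auto)
  also have "\<dots> = (\<Prod>e\<in>F. ennreal p)" using assms by (simp add: emeasure_pmf_single)
  also have "\<dots> = ennreal (p ^ card F)" using assms by (simp add: ennreal_power)
  finally show ?thesis .
qed

lemma emeasure_cylF:
  assumes "finite F" "F \<subseteq> lattice_edges" "0 \<le> p" "p \<le> 1"
  shows "emeasure (perc_measure p) {x \<in> space (perc_measure p). \<forall>e\<in>F. x e \<in> {False}}
     = ennreal ((1-p) ^ card F)"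
proof -
  interpret product_prob_space "\<lambda>_. measure_pmf (bernoulli_pmf p)" lattice_edges
    by unfold_locales
  have "emeasure (perc_measure p) {x \<in> space (perc_measure p). \<forall>e\<in>F. x e \<in> {False}} = (\<Prod>e\<in>F. emeasure (measure_pmf (bernoulli_pmf p)) {False})"
    unfolding perc_measure_def by (rule emeasure_PiM_Collect) (use assms in auto)
  also have "\<dots> = (\<Prod>e\<in>F. ennreal (1-p))" using assms by (simp add: emeasure_pmf_single)
  also have "\<dots> = ennreal ((1-p) ^ card F)" using assms by (simp add: ennreal_power)
  finally show ?thesis .
qed

lemma prob_perc: "prob_space (perc_measure p)"
  unfolding perc_measure_def by (intro prob_space_PiM) (simp add: prob_space_measure_pmf)

lemma event_eq:
  "{\<omega> \<in> space (perc_measure p). enl_in_P i j VH EH \<omega>} =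
   (\<Union>F\<in>{F. finite F \<and> F \<subseteq> lattice_edges \<and> enl_in_P i j VH EH (\<lambda>e. e \<in> F)}. cyl p F)"
proof (intro equalityI subsetI)
  fix \<omega> assume w: "\<omega> \<in> {\<omega> \<in> space (perc_measure p). enl_in_P i j VH EH \<omega>}"
  hence ws: "\<omega> \<in> space (perc_measure p)" and wP: "enl_in_P i j VH EH \<omega>" by simp_all
  obtain F where F: "finite F" "F \<subseteq> open_edges \<omega>" "enl_in_P i j VH EH (\<lambda>e. e \<in> F)"
    using enl_in_P_witness[OF wP] by blast
  have FL: "F \<subseteq> lattice_edges" using F(2) unfolding open_edges_def by blast
  have "\<forall>e\<in>F. \<omega> e" using F(2) unfolding open_edges_def by blast
  hence "\<omega> \<in> cyl p F" using ws unfolding cyl_def by simp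
  moreover have "F \<in> {F. finite F \<and> F \<subseteq> lattice_edges \<and> enl_in_P i j VH EH (\<lambda>e. e \<in> F)}"
    using F FL by simp
  ultimately show "\<omega> \<in> (\<Union>F\<in>{F. finite F \<and> F \<subseteq> lattice_edges \<and> enl_in_P i j VH EH (\<lambda>e. e \<in> F)}. cyl p F)"
    by (rule UN_I[rotated])
next
  fix \<omega> assume "\<omega> \<in> (\<Union>F\<in>{F. finite F \<and> F \<subseteq> lattice_edges \<and> enl_in_P i j VH EH (\<lambda>e. e \<in> F)}. cyl p F)"
  then obtain F where w: "\<omega> \<in> cyl p F" and F: "enl_in_P i j VH EH (\<lambda>e. e \<in> F)" by blast
  have ws: "\<omega> \<in> space (perc_measure p)" and we: "\<forall>e\<in>F. \<omega> e" using w unfolding cyl_def by simp_all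
  have "le_cfg (\<lambda>e. e \<in> F) \<omega>" using we unfolding le_cfg_def by blast
  from enl_in_P_mono[OF this F] ws show "\<omega> \<in> {\<omega> \<in> space (perc_measure p). enl_in_P i j VH EH \<omega>}" by simp
qed

lemma event_sets:
  "{\<omega> \<in> space (perc_measure p). enl_in_P i j VH EH \<omega>} \<in> sets (perc_measure p)"
proof -
  have c: "countable {F. finite F \<and> F \<subseteq> lattice_edges \<and> enl_in_P i j VH EH (\<lambda>e. e \<in> F)}"
    by (rule countable_subset[OF _ countable_Collect_finite_subset[of lattice_edges]]) auto
  show ?thesis unfolding event_eq
    by (rule sets.countable_UN''[OF c]) (auto intro: cyl_sets)
qed


lemma cylF_sets: "finite F \<Longrightarrow> F \<subseteq> lattice_edges \<Longrightarrow>
  {x \<in> space (perc_measure p). \<forall>e\<in>F. x e \<in> {False}} \<in> sets (perc_measure p)"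
proof (induction F rule: finite_induct)
  case empty then show ?case by simp
next
  case (insert a F)
  have "{x \<in> space (perc_measure p). \<forall>e\<in>insert a F. x e \<in> {False}} = ((\<lambda>x. x a) -` {False} \<inter> space (perc_measure p)) \<inter> {x \<in> space (perc_measure p). \<forall>e\<in>F. x e \<in> {False}}"
    by auto
  moreover have "(\<lambda>x. x a) -` {False} \<inter> space (perc_measure p) \<in> sets (perc_measure p)"
    unfolding perc_measure_def
    by (rule measurable_sets[OF measurable_component_singleton]) (use insert in auto)
  ultimately show ?case using insert by auto
qed

definition box :: "node \<Rightarrow> node \<Rightarrow> node set" where
  "box m M = {x. fst m \<le> fst x \<and> fst x \<le> fst M \<and> snd m \<le> snd x \<and> snd x \<le> snd M}"

definition boxE :: "node \<Rightarrow> node \<Rightarrow> edge set" where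
  "boxE m M = {(u,v) \<in> lattice_edges. u \<in> box m M \<and> v \<in> box m M}"

lemma box_finite: "finite (box m M)"
proof -
  have "box m M = {fst m..fst M} \<times> {snd m..snd M}" by (auto simp: box_def)
  thus ?thesis by simp
qed

lemma boxE_finite: "finite (boxE m M)"
  by (rule finite_subset[of _ "box m M \<times> box m M"]) (auto simp: boxE_def box_finite)

lemma box_path:
  "u \<in> box m M \<Longrightarrow> v \<in> box m M \<Longrightarrow> fst u \<le> fst v \<Longrightarrow> snd u \<le> snd v \<Longrightarrow> (u,v) \<in> (boxE m M)\<^sup>*"
proof (induction "nat (fst v - fst u + snd v - snd u)" arbitrary: u rule: less_induct)
  case less
  show ?case
  proof (cases "u = v")
    case True then show ?thesis by simp
  next
    case False
    show ?thesis
    proof (cases "fst u < fst v")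
      case True
      define u' where "u' = (fst u + 1, snd u)"
      have "u' \<in> box m M" using less.prems True unfolding u'_def box_def by auto
      moreover have "(u,u') \<in> boxE m M" using \<open>u' \<in> box m M\<close> less.prems
        unfolding boxE_def lattice_edges_def u'_def by auto
      moreover have "(u',v) \<in> (boxE m M)\<^sup>*"
        using less.hyps[of u'] less.prems True \<open>u' \<in> box m M\<close> unfolding u'_def by auto
      ultimately show ?thesis by (meson converse_rtrancl_into_rtrancl)
    next
      case f: False
      then have "snd u < snd v" using False less.prems by (metis order.order_iff_strict prod.collapse)
      define u' where "u' = (fst u, snd u + 1)"
      have "u' \<in> box m M" using less.prems \<open>snd u < snd v\<close> unfolding u'_def box_def by auto
      moreover have "(u,u') \<in> boxE m M" using \<open>u' \<in> box m M\<close> less.prems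
        unfolding boxE_def lattice_edges_def u'_def by auto
      moreover have "(u',v) \<in> (boxE m M)\<^sup>*"
        using less.hyps[of u'] less.prems \<open>snd u < snd v\<close> \<open>u' \<in> box m M\<close> unfolding u'_def by auto
      ultimately show ?thesis by (meson converse_rtrancl_into_rtrancl)
    qed
  qed
qed

lemma box_event:
  fixes i j :: node
  assumes "i \<in> VH"
  defines "m \<equiv> (min (fst i) (fst j), min (snd i) (snd j))"
    and "M \<equiv> (max (fst i) (fst j), max (snd i) (snd j))"
  shows "enl_in_P i j VH EH (\<lambda>e. e \<in> boxE m M)"
proof -
  let ?R = "boxE m M"
  have oR: "open_edges (\<lambda>e. e \<in> ?R) = ?R" by (auto simp: open_edges_def boxE_def)
  have ib: "i \<in> box m M" "j \<in> box m M" "m \<in> box m M" by (auto simp: box_def m_def M_def)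
  have mi: "(m,i) \<in> ?R\<^sup>*" "(m,j) \<in> ?R\<^sup>*" using box_path ib by (auto simp: m_def)
  let ?S = "?R \<union> ?R\<inverse>"
  have "box m M \<subseteq> cluster_nodes (\<lambda>e. e \<in> ?R) i"
  proof
    fix v assume v: "v \<in> box m M"
    have "(m,v) \<in> ?R\<^sup>*" using box_path[OF ib(3) v] v by (auto simp: box_def)
    hence 1: "(m,v) \<in> ?S\<^sup>*" using rtrancl_mono[of ?R ?S] by blast
    have "(i,m) \<in> (?R\<inverse>)\<^sup>*" using mi(1) by (simp add: rtrancl_converse)
    hence "(i,m) \<in> ?S\<^sup>*" using rtrancl_mono[of "?R\<inverse>" ?S] by blast
    with 1 show "v \<in> cluster_nodes (\<lambda>e. e \<in> ?R) i" unfolding cluster_nodes_def oR by auto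
  qed
  hence "?R \<subseteq> cluster_edges (\<lambda>e. e \<in> ?R) i"
  proof -
    assume sub: "box m M \<subseteq> cluster_nodes (\<lambda>e. e \<in> ?R) i"
    have "e \<in> cluster_edges (\<lambda>e. e \<in> ?R) i" if e: "e \<in> ?R" for e
    proof -
      have "fst e \<in> box m M" "snd e \<in> box m M" using e by (cases e; auto simp: boxE_def)+
      thus ?thesis using e sub unfolding cluster_edges_def oR by blast
    qed
    thus ?thesis by blast
  qed
  hence "?R \<subseteq> enl_edges VH EH (\<lambda>e. e \<in> ?R)" using assms(1) unfolding enl_edges_def by blast
  hence "(m,i) \<in> (enl_edges VH EH (\<lambda>e. e \<in> ?R))\<^sup>*" "(m,j) \<in> (enl_edges VH EH (\<lambda>e. e \<in> ?R))\<^sup>*"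
    using mi rtrancl_mono by blast+
  thus ?thesis unfolding enl_in_P_def ancestors_def by blast
qed

definition blockE :: "node set \<Rightarrow> edge set" where
  "blockE VH = {e \<in> lattice_edges. fst e \<in> VH \<or> snd e \<in> VH}"

lemma blockE_finite:
  assumes "finite VH" shows "finite (blockE VH)"
proof -
  let ?A = "VH \<times> ((\<lambda>u. (fst u + 1, snd u)) ` VH \<union> (\<lambda>u. (fst u, snd u + 1)) ` VH)"
  let ?B = "((\<lambda>u. (fst u - 1, snd u)) ` VH \<union> (\<lambda>u. (fst u, snd u - 1)) ` VH) \<times> VH"
  have "blockE VH \<subseteq> ?A \<union> ?B"
  proof
    fix e assume e: "e \<in> blockE VH"
    obtain u v where uv: "e = (u,v)" by (metis prod.exhaust)
    show "e \<in> ?A \<union> ?B"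
    proof (cases "u \<in> VH")
      case True
      then show ?thesis using e uv by (auto simp: blockE_def lattice_edges_def)
    next
      case False
      then have "v \<in> VH" using e uv by (auto simp: blockE_def)
      moreover have "u = (fst v - 1, snd v) \<or> u = (fst v, snd v - 1)"
        using e uv by (auto simp: blockE_def lattice_edges_def)
      ultimately show ?thesis using uv by auto
    qed
  qed
  thus ?thesis using assms by (meson finite_SigmaI finite_UnI finite_imageI finite_subset)
qed

lemma blocked_not_P:
  assumes "\<forall>e\<in>blockE VH. \<not> \<omega> e" "EH \<subseteq> VH \<times> VH"
    and "ancestors EH i \<inter> ancestors EH j = {}"
  shows "\<not> enl_in_P i j VH EH \<omega>"
proof -
  let ?O = "open_edges \<omega>"
  have cl: "cluster_nodes \<omega> k = {k}" if k: "k \<in> VH" for k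
  proof -
    have "v = k" if "(k,v) \<in> (?O \<union> ?O\<inverse>)\<^sup>*" for v
      using that
    proof (cases rule: converse_rtranclE)
      case (step y)
      then have "(k,y) \<in> ?O \<or> (y,k) \<in> ?O" by auto
      moreover have False if "(k,y) \<in> ?O"
      proof -
        have "(k,y) \<in> blockE VH" "\<omega> (k,y)" using that k by (simp_all add: open_edges_def blockE_def)
        thus False using assms(1) by blast
      qed
      moreover have False if "(y,k) \<in> ?O"
      proof -
        have "(y,k) \<in> blockE VH" "\<omega> (y,k)" using that k by (simp_all add: open_edges_def blockE_def)
        thus False using assms(1) by blast
      qed
      ultimately show ?thesis by blast
    qed simp
    thus ?thesis unfolding cluster_nodes_def by auto
  qed
  have "enl_edges VH EH \<omega> = EH"
  proof -
    have "cluster_edges \<omega> k = {}" if "k \<in> VH" for k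
      using cl[OF that] that assms(1) by (auto simp: cluster_edges_def open_edges_def blockE_def)
    thus ?thesis unfolding enl_edges_def by auto
  qed
  thus ?thesis using assms(3) unfolding enl_in_P_def by simp
qed


theorem mainTheorem8:
  fixes i j :: node and VH :: "node set" and EH :: "edge set"
  assumes "i \<noteq> j"
    and "finite VH"
    and "EH \<subseteq> lattice_edges"
    and "EH \<subseteq> VH \<times> VH"
    and "i \<in> VH" and "j \<in> VH"
    and "ancestors EH i \<inter> ancestors EH j = {}"
  shows "crit_prob i j VH EH = 1"
proof -
  let ?A = "\<lambda>p. {\<omega> \<in> space (perc_measure p). enl_in_P i j VH EH \<omega>}"
  have "{p \<in> {0..1}. measure (perc_measure p) (?A p) = 1} = {1}"
  proof (intro equalityI subsetI)
    fix p assume "p \<in> {p \<in> {0..1}. measure (perc_measure p) (?A p) = 1}"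
    then have p: "0 \<le> p" "p \<le> 1" and m1: "measure (perc_measure p) (?A p) = 1" by auto
    interpret P: prob_space "perc_measure p" by (rule prob_perc)
    show "p \<in> {1}"
    proof (rule ccontr)
      assume "p \<notin> {1}" hence p1: "p < 1" using p by auto
      let ?G = "blockE VH"
      let ?C = "{x \<in> space (perc_measure p). \<forall>e\<in>?G. x e \<in> {False}}"
      have Gf: "finite ?G" "?G \<subseteq> lattice_edges" using blockE_finite[OF assms(2)] by (auto simp: blockE_def)
      have Cs: "?C \<in> sets (perc_measure p)" using cylF_sets[OF Gf] .
      have mC: "measure (perc_measure p) ?C = (1-p) ^ card ?G"
        using emeasure_cylF[OF Gf p] p1 by (simp add: P.emeasure_eq_measure)
      have "?A p \<subseteq> space (perc_measure p) - ?C"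
      proof
        fix \<omega> assume w: "\<omega> \<in> ?A p"
        show "\<omega> \<in> space (perc_measure p) - ?C"
        proof
          show "\<omega> \<in> space (perc_measure p)" using w by simp
          show "\<omega> \<notin> ?C"
          proof
            assume "\<omega> \<in> ?C"
            hence "\<forall>e\<in>blockE VH. \<not> \<omega> e" by simp
            from blocked_not_P[OF this assms(4) assms(7)] w show False by simp
          qed
        qed
      qed
      hence "measure (perc_measure p) (?A p) \<le> measure (perc_measure p) (space (perc_measure p) - ?C)"
        using Cs by (intro P.finite_measure_mono) auto
      also have "\<dots> = 1 - (1-p) ^ card ?G" using P.prob_compl[OF Cs] mC by simp
      also have "\<dots> < 1" using p1 by simp
      finally show False using m1 by simp
    qed
  next
    fix p assume "p \<in> {1::real}"
    hence p: "p = 1" by simp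
    interpret P: prob_space "perc_measure p" by (rule prob_perc)
    define m where "m = (min (fst i) (fst j), min (snd i) (snd j))"
    define M where "M = (max (fst i) (fst j), max (snd i) (snd j))"
    let ?R = "boxE m M"
    have Rf: "finite ?R" "?R \<subseteq> lattice_edges" using boxE_finite by (auto simp: boxE_def)
    have "?R \<in> {F. finite F \<and> F \<subseteq> lattice_edges \<and> enl_in_P i j VH EH (\<lambda>e. e \<in> F)}"
      using Rf box_event[OF assms(5), where j=j and EH=EH] unfolding m_def M_def by simp
    hence "cyl p ?R \<subseteq> ?A p"
      by (subst event_eq) (rule UN_upper)
    hence "measure (perc_measure p) (cyl p ?R) \<le> measure (perc_measure p) (?A p)"
      by (intro P.finite_measure_mono event_sets)
    moreover have "measure (perc_measure p) (cyl p ?R) = 1"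
    proof -
      have "emeasure (perc_measure p) (cyl p ?R) = ennreal (p ^ card ?R)"
        using emeasure_cyl[OF Rf, of p] p by simp
      thus ?thesis unfolding measure_def using p by simp
    qed
    ultimately have "measure (perc_measure p) (?A p) = 1"
      using P.prob_le_1[of "?A p"] by linarith
    thus "p \<in> {p \<in> {0..1}. measure (perc_measure p) (?A p) = 1}" using p by simp
  qed
  thus ?thesis unfolding crit_prob_def by simp
qed

end
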